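(* Let $f:\mathbb{R}^d\to\mathbb{R}$ be differentiable, bounded from below with infimum $f^{\mathrm{inf}}$, with $L$-Lipschitz gradient. Suppose the stochastic gradient $g$ satisfies $\mathbb{E}[g(x)]=\nabla f(x)$ and $\mathbb{E}\|g(x)\|^2\le 2A(f(x)-f^{\mathrm{inf}})+B\|\nabla f(x)\|^2+C$ for all $x$, with constants $A,B,C\ge0$. Run SGD $x_{k+1}=x_k-\gamma g(x_k)$ from $x_0\in\mathbb{R}^d$ with a constant stepsize $\gamma>0$ satisfying $\gamma\le\frac{1}{BL}$. Fix $w_{-1}>0$ and let $w_k=\frac{w_{-1}}{(1+L\gamma^2A)^{k+1}}$, $r_k=\mathbb{E}\|\nabla f(x_k)\|^2$, $\delta_k=\mathbb{E}[f(x_k)]-f^{\mathrm{inf}}$. Then for every integer $K\ge1$, $$\frac12\sum_{k=0}^{K-1}w_kr_k+\frac{w_{K-1}}{\gamma}\delta_K\le\frac{w_{-1}}{\gamma}\delta_0+\frac{LC}{2}\sum_{k=0}^{K-1}w_k\gamma.$$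
   Context: In SGD, at each iteration $g(x_k)$ is drawn with fresh randomness, independent of the past given $x_k$, so that $\mathbb{E}[g(x_k)\mid x_k]=\nabla f(x_k)$ and the second-moment bound holds conditionally on $x_k$. If $B=0$ the condition $\gamma\le 1/(BL)$ is vacuous. *)

theory Defs
  imports "HOL-Probability.Probability"
begin

fun sgd_iter :: "('x::real_vector \<Rightarrow> 'b \<Rightarrow> 'x) \<Rightarrow> real \<Rightarrow> 'x \<Rightarrow> nat \<Rightarrow> (nat \<Rightarrow> 'b) \<Rightarrow> 'x" where
  "sgd_iter G \<gamma> x0 0 \<omega> = x0"
| "sgd_iter G \<gamma> x0 (Suc k) \<omega> = sgd_iter G \<gamma> x0 k \<omega> - \<gamma> *\<^sub>R G (sgd_iter G \<gamma> x0 k \<omega>) (\<omega> k)"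

end

theory Submission
  imports Defs
begin

lemma descent:
  fixes f :: "'x::euclidean_space \<Rightarrow> real"
  assumes deriv: "\<And>x. (f has_derivative (\<lambda>h. gradf x \<bullet> h)) (at x)"
    and lip: "\<And>x y. norm (gradf x - gradf y) \<le> L * norm (x - y)"
  shows "f (x + h) \<le> f x + gradf x \<bullet> h + L/2 * (norm h)\<^sup>2"
proof -
  define \<phi> where "\<phi> t = f (x + t *\<^sub>R h) - t * (gradf x \<bullet> h) - L/2 * t\<^sup>2 * (norm h)\<^sup>2" for t
  have d: "DERIV \<phi> t :> (gradf (x + t *\<^sub>R h) \<bullet> h - gradf x \<bullet> h - L * t * (norm h)\<^sup>2)" for t
  proof -
    have "((\<lambda>t. x + t *\<^sub>R h) has_derivative (\<lambda>s. s *\<^sub>R h)) (at t)"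
      by (auto intro!: derivative_eq_intros)
    from has_derivative_compose[OF this deriv]
    have "((\<lambda>t. f (x + t *\<^sub>R h)) has_derivative (\<lambda>s. gradf (x + t *\<^sub>R h) \<bullet> (s *\<^sub>R h))) (at t)" .
    moreover have "(\<lambda>s. gradf (x + t *\<^sub>R h) \<bullet> (s *\<^sub>R h)) = (*) (gradf (x + t *\<^sub>R h) \<bullet> h)"
      by (auto simp: fun_eq_iff)
    ultimately have "((\<lambda>t. f (x + t *\<^sub>R h)) has_real_derivative (gradf (x + t *\<^sub>R h) \<bullet> h)) (at t)"
      by (simp add: has_field_derivative_def)
    then show ?thesis unfolding \<phi>_def
      by (auto intro!: derivative_eq_intros simp: power2_eq_square)
  qed
  have "\<phi> 1 \<le> \<phi> 0"
  proof (rule DERIV_nonpos_imp_nonincreasing[of 0 1])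
    fix t :: real assume t: "0 \<le> t" "t \<le> 1"
    have "gradf (x + t *\<^sub>R h) \<bullet> h - gradf x \<bullet> h = (gradf (x + t *\<^sub>R h) - gradf x) \<bullet> h"
      by (simp add: inner_diff_left)
    also have "\<dots> \<le> norm (gradf (x + t *\<^sub>R h) - gradf x) * norm h"
      by (rule norm_cauchy_schwarz)
    also have "\<dots> \<le> (L * norm (t *\<^sub>R h)) * norm h"
      using lip[of "x + t *\<^sub>R h" x] by (intro mult_right_mono) auto
    also have "\<dots> = L * t * (norm h)\<^sup>2" using t by (simp add: power2_eq_square)
    finally show "\<exists>y. DERIV \<phi> t :> y \<and> y \<le> 0" using d[of t] by (intro exI[of _ "_ - _ - _"]) auto
  qed simp
  then show ?thesis unfolding \<phi>_def by simp
qed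

lemma sgd_iter_prefix:
  "(\<And>j. j < k \<Longrightarrow> \<omega> j = \<omega>' j) \<Longrightarrow> sgd_iter G \<gamma> x0 k \<omega> = sgd_iter G \<gamma> x0 k \<omega>'"
  by (induction k) auto

lemma sgd_iter_meas:
  fixes G :: "'x::euclidean_space \<Rightarrow> 'b \<Rightarrow> 'x"
  assumes G_meas: "(\<lambda>(x, \<xi>). G x \<xi>) \<in> borel_measurable (borel \<Otimes>\<^sub>M D)"
  shows "{..<k} \<subseteq> I \<Longrightarrow> (\<lambda>\<omega>. sgd_iter G \<gamma> x0 k \<omega>) \<in> borel_measurable (PiM I (\<lambda>_. D))"
proof (induction k)
  case 0 then show ?case by simp
next
  case (Suc k)
  have sub: "{..<k} \<subseteq> I" and kI: "k \<in> I" using Suc.prems by auto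
  have IH: "(\<lambda>\<omega>. sgd_iter G \<gamma> x0 k \<omega>) \<in> borel_measurable (PiM I (\<lambda>_. D))" using Suc.IH[OF sub] .
  have "(\<lambda>\<omega>. (sgd_iter G \<gamma> x0 k \<omega>, \<omega> k)) \<in> measurable (PiM I (\<lambda>_. D)) (borel \<Otimes>\<^sub>M D)"
    using IH kI by (intro measurable_Pair) auto
  from measurable_compose[OF this G_meas]
  have "(\<lambda>\<omega>. G (sgd_iter G \<gamma> x0 k \<omega>) (\<omega> k)) \<in> borel_measurable (PiM I (\<lambda>_. D))" by simp
  then show ?case using IH by simp
qed

lemma step_nn:
  fixes G :: "'x::euclidean_space \<Rightarrow> 'b \<Rightarrow> 'x" and h :: "'x \<times> 'b \<Rightarrow> ennreal"
  assumes D_prob: "prob_space D"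
    and G_meas: "(\<lambda>(x, \<xi>). G x \<xi>) \<in> borel_measurable (borel \<Otimes>\<^sub>M D)"
    and h_meas: "h \<in> borel_measurable (borel \<Otimes>\<^sub>M D)"
  shows "(\<integral>\<^sup>+\<omega>. h (sgd_iter G \<gamma> x0 k \<omega>, \<omega> k) \<partial>PiM UNIV (\<lambda>_. D))
       = (\<integral>\<^sup>+\<omega>. (\<integral>\<^sup>+\<xi>. h (sgd_iter G \<gamma> x0 k \<omega>, \<xi>) \<partial>D) \<partial>PiM UNIV (\<lambda>_. D))"
proof -
  interpret D: prob_space D by fact
  define P' where "P' = PiM (UNIV - {k}) (\<lambda>_::nat. D)"
  interpret P': prob_space P' unfolding P'_def by (intro prob_space_PiM D_prob)
  interpret pair_prob_space D P' by unfold_locales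
  let ?x = "sgd_iter G \<gamma> x0 k"
  have eq: "distr (D \<Otimes>\<^sub>M P') (PiM UNIV (\<lambda>_. D)) (\<lambda>(x, X). X(k := x)) = PiM UNIV (\<lambda>_. D)"
  proof -
    have *: "insert k (UNIV - {k}) = (UNIV::nat set)" by auto
    have "distr (D \<Otimes>\<^sub>M PiM (UNIV - {k}) (\<lambda>_. D)) (PiM (insert k (UNIV - {k})) (\<lambda>_. D)) (\<lambda>(x, X). X(k := x)) = PiM (insert k (UNIV - {k})) (\<lambda>_. D)"
      by (rule distr_pair_PiM_eq_PiM) (auto intro: D_prob)
    then show ?thesis unfolding * P'_def .
  qed
  have Tm0: "(\<lambda>z i. if i = k then fst z else snd z i) \<in> measurable (D \<Otimes>\<^sub>M P') (PiM UNIV (\<lambda>_. D))"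
  proof (rule measurable_PiM_single')
    fix i :: nat
    show "(\<lambda>z. if i = k then fst z else snd z i) \<in> measurable (D \<Otimes>\<^sub>M P') D"
    proof (cases "i = k")
      case True then show ?thesis by simp
    next
      case False
      have "(\<lambda>X. X i) \<in> measurable P' D" unfolding P'_def
        using False by (intro measurable_component_singleton) auto
      from measurable_compose[OF measurable_snd this] False show ?thesis by simp
    qed
  next
    show "(\<lambda>z i. if i = k then fst z else snd z i) \<in> space (D \<Otimes>\<^sub>M P') \<rightarrow> (\<Pi>\<^sub>E i\<in>UNIV. space D)"
    proof (rule Pi_I)
      fix z assume "z \<in> space (D \<Otimes>\<^sub>M P')"
      then have z1: "fst z \<in> space D" and z2: "snd z \<in> space P'"
        unfolding space_pair_measure mem_Times_iff by blast+
      have z3: "snd z i \<in> space D" if "i \<noteq> k" for i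
        using z2 that unfolding P'_def space_PiM PiE_iff by blast
      show "(\<lambda>i. if i = k then fst z else snd z i) \<in> (\<Pi>\<^sub>E i\<in>UNIV. space D)"
        using z1 z3 unfolding PiE_iff by simp
    qed
  qed
  have Teq: "(\<lambda>(x, X). X(k := x)) = (\<lambda>z i. if i = k then fst z else snd z i)"
    by (auto simp: fun_eq_iff)
  have Tm: "(\<lambda>(x, X). X(k := x)) \<in> measurable (D \<Otimes>\<^sub>M P') (PiM UNIV (\<lambda>_. D))"
    unfolding Teq by (rule Tm0)
  have xm: "?x \<in> borel_measurable P'" unfolding P'_def
    by (rule sgd_iter_meas[OF G_meas]) auto
  have xm2: "?x \<in> borel_measurable (PiM UNIV (\<lambda>_. D))"
    by (rule sgd_iter_meas[OF G_meas]) auto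
  have xupd: "?x (X(k := \<xi>)) = ?x X" for X \<xi>
    by (rule sgd_iter_prefix) auto
  have gen: "(\<integral>\<^sup>+\<omega>. F \<omega> \<partial>PiM UNIV (\<lambda>_. D)) = (\<integral>\<^sup>+X. (\<integral>\<^sup>+\<xi>. F (X(k := \<xi>)) \<partial>D) \<partial>P')"
    if Fm: "F \<in> borel_measurable (PiM UNIV (\<lambda>_. D))" for F
  proof -
    have "(\<integral>\<^sup>+\<omega>. F \<omega> \<partial>PiM UNIV (\<lambda>_. D)) = (\<integral>\<^sup>+\<omega>. F \<omega> \<partial>distr (D \<Otimes>\<^sub>M P') (PiM UNIV (\<lambda>_. D)) (\<lambda>(x, X). X(k := x)))"
      by (simp add: eq)
    also have "\<dots> = (\<integral>\<^sup>+z. F ((\<lambda>(x, X). X(k := x)) z) \<partial>(D \<Otimes>\<^sub>M P'))"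
    proof -
      have Fm': "F \<in> borel_measurable (distr (D \<Otimes>\<^sub>M P') (PiM UNIV (\<lambda>_. D)) (\<lambda>(x, X). X(k := x)))"
        using Fm by (simp only: measurable_distr_eq1)
      show ?thesis by (rule nn_integral_distr[OF Tm Fm'])
    qed
    also have "\<dots> = (\<integral>\<^sup>+X. (\<integral>\<^sup>+\<xi>. F (X(k := \<xi>)) \<partial>D) \<partial>P')"
      by (subst nn_integral_snd[symmetric]) (auto intro: measurable_compose[OF Tm Fm])
    finally show ?thesis .
  qed
  have hm1: "(\<lambda>\<omega>. h (?x \<omega>, \<omega> k)) \<in> borel_measurable (PiM UNIV (\<lambda>_. D))"
    by (rule measurable_compose[OF _ h_meas]) (intro measurable_Pair xm2, auto)
  have hm2: "(\<lambda>\<omega>. (\<integral>\<^sup>+\<xi>. h (?x \<omega>, \<xi>) \<partial>D)) \<in> borel_measurable (PiM UNIV (\<lambda>_. D))"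
  proof -
    have "(\<lambda>y. (\<integral>\<^sup>+\<xi>. h (y, \<xi>) \<partial>D)) \<in> borel_measurable borel"
      using h_meas by (intro D.borel_measurable_nn_integral) simp
    from measurable_compose[OF xm2 this] show ?thesis .
  qed
  show ?thesis
    unfolding gen[OF hm1] gen[OF hm2]
    by (simp add: xupd D.emeasure_space_1)
qed

lemma telescope:
  fixes \<delta> r :: "nat \<Rightarrow> real"
  assumes step: "\<And>k. \<delta> (Suc k) + \<gamma>/2 * r k \<le> q * \<delta> k + e * \<gamma>\<^sup>2"
    and q: "q > 0" and g: "\<gamma> > 0" and w: "wm1 > 0"
  shows "1/2 * (\<Sum>k<K. wm1 / q^(k+1) * r k) + wm1 / q^K / \<gamma> * \<delta> K
     \<le> wm1 / \<gamma> * \<delta> 0 + e * (\<Sum>k<K. wm1 / q^(k+1) * \<gamma>)"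
proof (induction K)
  case 0 then show ?case by simp
next
  case (Suc K)
  define W where "W = wm1 / q^(K+1) / \<gamma>"
  have W: "W > 0" unfolding W_def using q g w by simp
  have "W * (\<delta> (Suc K) + \<gamma>/2 * r K) \<le> W * (q * \<delta> K + e * \<gamma>\<^sup>2)"
    using step[of K] W by (intro mult_left_mono) auto
  moreover have "W * (\<delta> (Suc K) + \<gamma>/2 * r K) = wm1 / q^(Suc K) / \<gamma> * \<delta> (Suc K) + 1/2 * (wm1 / q^(K+1) * r K)"
    unfolding W_def using g q by (simp add: field_simps)
  moreover have "W * (q * \<delta> K + e * \<gamma>\<^sup>2) = wm1 / q^K / \<gamma> * \<delta> K + e * (wm1 / q^(K+1) * \<gamma>)"
    unfolding W_def using g q by (simp add: field_simps power2_eq_square)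
  ultimately show ?case using Suc.IH by (simp add: algebra_simps)
qed

theorem lemma2:
  fixes f :: "'x::euclidean_space \<Rightarrow> real"
    and gradf :: "'x \<Rightarrow> 'x"
    and D :: "'b measure"
    and G :: "'x \<Rightarrow> 'b \<Rightarrow> 'x"
    and L A B C \<gamma> wm1 :: real
    and x0 :: 'x
    and K :: nat
  assumes deriv: "\<And>x. (f has_derivative (\<lambda>h. gradf x \<bullet> h)) (at x)"
    and bdd: "bdd_below (range f)"
    and lip: "\<And>x y. norm (gradf x - gradf y) \<le> L * norm (x - y)"
    and ABC: "A \<ge> 0" "B \<ge> 0" "C \<ge> 0"
    and D_prob: "prob_space D"
    and G_meas: "(\<lambda>(x, \<xi>). G x \<xi>) \<in> borel_measurable (borel \<Otimes>\<^sub>M D)"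
    and unbiased: "\<And>x. integrable D (G x) \<and> (\<integral>\<xi>. G x \<xi> \<partial>D) = gradf x"
    and second_moment: "\<And>x. (\<integral>\<^sup>+\<xi>. ennreal ((norm (G x \<xi>))\<^sup>2) \<partial>D)
        \<le> ennreal (2 * A * (f x - (INF z. f z)) + B * (norm (gradf x))\<^sup>2 + C)"
    and \<gamma>_pos: "\<gamma> > 0"
    and \<gamma>_le: "\<gamma> * (B * L) \<le> 1"
    and wm1_pos: "wm1 > 0"
    and K: "K \<ge> 1"
  shows
    "let \<Omega> = PiM UNIV (\<lambda>_::nat. D);
         x = sgd_iter G \<gamma> x0;
         w = (\<lambda>k::nat. wm1 / (1 + L * \<gamma>\<^sup>2 * A) ^ (k + 1));
         r = (\<lambda>k. \<integral>\<omega>. (norm (gradf (x k \<omega>)))\<^sup>2 \<partial>\<Omega>);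
         \<delta> = (\<lambda>k. (\<integral>\<omega>. f (x k \<omega>) \<partial>\<Omega>) - (INF z. f z))
     in 1/2 * (\<Sum>k<K. w k * r k) + w (K - 1) / \<gamma> * \<delta> K
        \<le> wm1 / \<gamma> * \<delta> 0 + L * C / 2 * (\<Sum>k<K. w k * \<gamma>)"
proof -
  interpret D: prob_space D by fact
  define \<Omega> where "\<Omega> = PiM UNIV (\<lambda>_::nat. D)"
  interpret \<Omega>: prob_space \<Omega> unfolding \<Omega>_def by (intro prob_space_PiM D_prob)
  define finf where "finf = (INF z. f z)"
  have finf_le: "finf \<le> f y" for y unfolding finf_def using bdd by (rule cINF_lower) simp
  have L0: "L \<ge> 0"
  proof -
    obtain b :: 'x where b: "b \<in> Basis" using nonempty_Basis by blast
    have "0 \<le> norm (gradf b - gradf 0)" by simp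
    also have "\<dots> \<le> L * norm (b - 0)" by (rule lip)
    finally show ?thesis using b by simp
  qed
  define q where "q = 1 + L * \<gamma>\<^sup>2 * A"
  define c where "c = L * \<gamma>\<^sup>2 * C / 2"
  have q1: "q \<ge> 1" unfolding q_def using L0 ABC by simp
  have c0: "c \<ge> 0" unfolding c_def using L0 ABC by simp
  have fcont: "continuous_on UNIV f"
    using deriv by (intro continuous_at_imp_continuous_on) (blast intro: has_derivative_continuous)
  have fm[measurable]: "f \<in> borel_measurable borel" by (rule borel_measurable_continuous_onI[OF fcont])
  have gcont: "continuous_on UNIV gradf"
  proof (rule lipschitz_on_continuous_on)
    show "L-lipschitz_on UNIV gradf" unfolding lipschitz_on_def using L0 lip by (simp add: dist_norm)
  qed
  have gm[measurable]: "gradf \<in> borel_measurable borel" by (rule borel_measurable_continuous_onI[OF gcont])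
  have Gy_meas: "G y \<in> borel_measurable D" for y
  proof -
    have "(\<lambda>\<xi>. (y, \<xi>)) \<in> measurable D (borel \<Otimes>\<^sub>M D)" by simp
    from measurable_compose[OF this G_meas] show ?thesis by simp
  qed
  have per_y: "(\<integral>\<^sup>+\<xi>. ennreal (f (y - \<gamma> *\<^sub>R G y \<xi>) - finf) \<partial>D) + ennreal (\<gamma>/2 * (norm (gradf y))\<^sup>2)
      \<le> ennreal (q * (f y - finf) + c)" for y
  proof -
    let ?g = "G y"
    have gi: "integrable D ?g" and gint: "(\<integral>\<xi>. ?g \<xi> \<partial>D) = gradf y" using unbiased[of y] by auto
    have gm': "?g \<in> borel_measurable D" by (rule Gy_meas)
    define M where "M = 2 * A * (f y - finf) + B * (norm (gradf y))\<^sup>2 + C"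
    have M0: "M \<ge> 0" unfolding M_def using ABC finf_le[of y] by simp
    have mom: "(\<integral>\<^sup>+\<xi>. ennreal ((norm (?g \<xi>))\<^sup>2) \<partial>D) \<le> ennreal M"
      using second_moment[of y] unfolding M_def finf_def .
    have sqi: "integrable D (\<lambda>\<xi>. (norm (?g \<xi>))\<^sup>2)"
    proof (rule integrableI_bounded)
      show "(\<lambda>\<xi>. (norm (?g \<xi>))\<^sup>2) \<in> borel_measurable D" using gm' by measurable
      have "(\<integral>\<^sup>+\<xi>. ennreal (norm ((norm (?g \<xi>))\<^sup>2)) \<partial>D) = (\<integral>\<^sup>+\<xi>. ennreal ((norm (?g \<xi>))\<^sup>2) \<partial>D)"
        by simp
      also have "\<dots> < \<infinity>" using mom by (simp add: le_less_trans)
      finally show "(\<integral>\<^sup>+\<xi>. ennreal (norm ((norm (?g \<xi>))\<^sup>2)) \<partial>D) < \<infinity>" .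
    qed
    have sqle: "(\<integral>\<xi>. (norm (?g \<xi>))\<^sup>2 \<partial>D) \<le> M"
    proof -
      have "ennreal (\<integral>\<xi>. (norm (?g \<xi>))\<^sup>2 \<partial>D) = (\<integral>\<^sup>+\<xi>. ennreal ((norm (?g \<xi>))\<^sup>2) \<partial>D)"
        by (rule nn_integral_eq_integral[symmetric]) (use sqi in auto)
      with mom have "ennreal (\<integral>\<xi>. (norm (?g \<xi>))\<^sup>2 \<partial>D) \<le> ennreal M" by simp
      then show ?thesis using ennreal_le_iff[OF M0] by blast
    qed
    define u where "u \<xi> = f (y - \<gamma> *\<^sub>R ?g \<xi>) - finf" for \<xi>
    define b where "b \<xi> = (f y - finf) - \<gamma> * (gradf y \<bullet> ?g \<xi>) + (L * \<gamma>\<^sup>2 / 2) * (norm (?g \<xi>))\<^sup>2" for \<xi>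
    have ub: "u \<xi> \<le> b \<xi>" for \<xi>
    proof -
      have "f (y + (- (\<gamma> *\<^sub>R ?g \<xi>))) \<le> f y + gradf y \<bullet> (- (\<gamma> *\<^sub>R ?g \<xi>)) + L/2 * (norm (- (\<gamma> *\<^sub>R ?g \<xi>)))\<^sup>2"
        by (rule descent[OF deriv lip])
      then show ?thesis unfolding u_def b_def using \<gamma>_pos
        by (simp add: power_mult_distrib algebra_simps)
    qed
    have u0: "0 \<le> u \<xi>" for \<xi> unfolding u_def using finf_le by simp
    have um: "u \<in> borel_measurable D" unfolding u_def using gm' by measurable
    have bi: "integrable D b" unfolding b_def using gi sqi by auto
    have ui: "integrable D u"
      by (rule Bochner_Integration.integrable_bound[OF bi um]) (use u0 ub in \<open>auto intro!: AE_I2 simp: abs_of_nonneg intro: order_trans[OF _ abs_ge_self]\<close>)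
    have "(\<integral>\<xi>. u \<xi> \<partial>D) \<le> (\<integral>\<xi>. b \<xi> \<partial>D)" by (rule integral_mono[OF ui bi ub])
    also have "(\<integral>\<xi>. b \<xi> \<partial>D) = (f y - finf) - \<gamma> * (norm (gradf y))\<^sup>2 + (L * \<gamma>\<^sup>2 / 2) * (\<integral>\<xi>. (norm (?g \<xi>))\<^sup>2 \<partial>D)"
      unfolding b_def using gi sqi gint by (simp add: power2_norm_eq_inner D.prob_space)
    also have "\<dots> \<le> (f y - finf) - \<gamma> * (norm (gradf y))\<^sup>2 + (L * \<gamma>\<^sup>2 / 2) * M"
      using sqle L0 by (intro add_left_mono mult_left_mono) auto
    also have "\<dots> \<le> q * (f y - finf) + c - \<gamma>/2 * (norm (gradf y))\<^sup>2"
    proof -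
      have "0 \<le> \<gamma> * (norm (gradf y))\<^sup>2 * (1 - \<gamma> * (B * L))"
        using \<gamma>_pos \<gamma>_le by simp
      then show ?thesis unfolding M_def q_def c_def by (simp add: algebra_simps power2_eq_square)
    qed
    finally have ule: "(\<integral>\<xi>. u \<xi> \<partial>D) + \<gamma>/2 * (norm (gradf y))\<^sup>2 \<le> q * (f y - finf) + c" by simp
    have "(\<integral>\<^sup>+\<xi>. ennreal (u \<xi>) \<partial>D) = ennreal (\<integral>\<xi>. u \<xi> \<partial>D)"
      by (rule nn_integral_eq_integral) (use ui u0 in auto)
    then have "(\<integral>\<^sup>+\<xi>. ennreal (u \<xi>) \<partial>D) + ennreal (\<gamma>/2 * (norm (gradf y))\<^sup>2)
        = ennreal ((\<integral>\<xi>. u \<xi> \<partial>D) + \<gamma>/2 * (norm (gradf y))\<^sup>2)"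
      using \<gamma>_pos u0 by (simp add: ennreal_plus integral_nonneg)
    also have "\<dots> \<le> ennreal (q * (f y - finf) + c)" using ule by (rule ennreal_leI)
    finally show ?thesis unfolding u_def .
  qed
  define X where "X = sgd_iter G \<gamma> x0"
  have Xm[measurable]: "X k \<in> borel_measurable \<Omega>" for k
    unfolding X_def \<Omega>_def by (rule sgd_iter_meas[OF G_meas]) simp
  have ineq_nn: "(\<integral>\<^sup>+\<omega>. ennreal (f (X (Suc k) \<omega>) - finf) + ennreal (\<gamma>/2 * (norm (gradf (X k \<omega>)))\<^sup>2) \<partial>\<Omega>)
      \<le> (\<integral>\<^sup>+\<omega>. ennreal (q * (f (X k \<omega>) - finf) + c) \<partial>\<Omega>)" for k
  proof -
    define h where "h = (\<lambda>(y, \<xi>). ennreal (f (y - \<gamma> *\<^sub>R G y \<xi>) - finf))"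
    have hm: "h \<in> borel_measurable (borel \<Otimes>\<^sub>M D)"
    proof -
      have "(\<lambda>z. fst z - \<gamma> *\<^sub>R (case z of (x, \<xi>) \<Rightarrow> G x \<xi>)) \<in> borel_measurable (borel \<Otimes>\<^sub>M D)"
        using G_meas by measurable
      then have "(\<lambda>z. f (fst z - \<gamma> *\<^sub>R (case z of (x, \<xi>) \<Rightarrow> G x \<xi>)) - finf) \<in> borel_measurable (borel \<Otimes>\<^sub>M D)"
        by measurable
      then show ?thesis unfolding h_def by (simp add: case_prod_beta')
    qed
    have hnm: "(\<lambda>y. \<integral>\<^sup>+\<xi>. h (y, \<xi>) \<partial>D) \<in> borel_measurable borel"
      using hm by (intro D.borel_measurable_nn_integral) simp
    have XS: "X (Suc k) \<omega> = X k \<omega> - \<gamma> *\<^sub>R G (X k \<omega>) (\<omega> k)" for \<omega> unfolding X_def by simp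
    have "(\<integral>\<^sup>+\<omega>. ennreal (f (X (Suc k) \<omega>) - finf) + ennreal (\<gamma>/2 * (norm (gradf (X k \<omega>)))\<^sup>2) \<partial>\<Omega>)
        = (\<integral>\<^sup>+\<omega>. ennreal (f (X (Suc k) \<omega>) - finf) \<partial>\<Omega>) + (\<integral>\<^sup>+\<omega>. ennreal (\<gamma>/2 * (norm (gradf (X k \<omega>)))\<^sup>2) \<partial>\<Omega>)"
      by (rule nn_integral_add) measurable
    also have "(\<integral>\<^sup>+\<omega>. ennreal (f (X (Suc k) \<omega>) - finf) \<partial>\<Omega>) = (\<integral>\<^sup>+\<omega>. h (X k \<omega>, \<omega> k) \<partial>\<Omega>)"
      unfolding h_def XS by simp
    also have "\<dots> = (\<integral>\<^sup>+\<omega>. (\<integral>\<^sup>+\<xi>. h (X k \<omega>, \<xi>) \<partial>D) \<partial>\<Omega>)"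
      unfolding \<Omega>_def X_def by (rule step_nn[OF D_prob G_meas hm])
    also have "\<dots> + (\<integral>\<^sup>+\<omega>. ennreal (\<gamma>/2 * (norm (gradf (X k \<omega>)))\<^sup>2) \<partial>\<Omega>)
        = (\<integral>\<^sup>+\<omega>. (\<integral>\<^sup>+\<xi>. h (X k \<omega>, \<xi>) \<partial>D) + ennreal (\<gamma>/2 * (norm (gradf (X k \<omega>)))\<^sup>2) \<partial>\<Omega>)"
      by (rule nn_integral_add[symmetric]) (use measurable_compose[OF Xm hnm] in measurable)
    also have "\<dots> \<le> (\<integral>\<^sup>+\<omega>. ennreal (q * (f (X k \<omega>) - finf) + c) \<partial>\<Omega>)"
      by (rule nn_integral_mono) (use per_y in \<open>simp add: h_def\<close>)
    finally show ?thesis .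
  qed
  have rhs_eq: "(\<integral>\<^sup>+\<omega>. ennreal (q * (f (X k \<omega>) - finf) + c) \<partial>\<Omega>) = ennreal (\<integral>\<omega>. q * (f (X k \<omega>) - finf) + c \<partial>\<Omega>)"
    if "integrable \<Omega> (\<lambda>\<omega>. f (X k \<omega>))" for k
    by (rule nn_integral_eq_integral) (use that q1 c0 finf_le in \<open>auto intro!: AE_I2 add_nonneg_nonneg mult_nonneg_nonneg\<close>)
  have fin: "(\<integral>\<^sup>+\<omega>. ennreal (f (X (Suc k) \<omega>) - finf) \<partial>\<Omega>) < \<infinity> \<and> (\<integral>\<^sup>+\<omega>. ennreal (\<gamma>/2 * (norm (gradf (X k \<omega>)))\<^sup>2) \<partial>\<Omega>) < \<infinity>"
    if "integrable \<Omega> (\<lambda>\<omega>. f (X k \<omega>))" for k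
  proof -
    have lt: "(\<integral>\<^sup>+\<omega>. ennreal (f (X (Suc k) \<omega>) - finf) + ennreal (\<gamma>/2 * (norm (gradf (X k \<omega>)))\<^sup>2) \<partial>\<Omega>) < \<infinity>"
      using ineq_nn[of k] unfolding rhs_eq[OF that] by (simp add: le_less_trans)
    have "(\<integral>\<^sup>+\<omega>. ennreal (f (X (Suc k) \<omega>) - finf) \<partial>\<Omega>) \<le> (\<integral>\<^sup>+\<omega>. ennreal (f (X (Suc k) \<omega>) - finf) + ennreal (\<gamma>/2 * (norm (gradf (X k \<omega>)))\<^sup>2) \<partial>\<Omega>)"
      by (rule nn_integral_mono) simp
    moreover have "(\<integral>\<^sup>+\<omega>. ennreal (\<gamma>/2 * (norm (gradf (X k \<omega>)))\<^sup>2) \<partial>\<Omega>) \<le> (\<integral>\<^sup>+\<omega>. ennreal (f (X (Suc k) \<omega>) - finf) + ennreal (\<gamma>/2 * (norm (gradf (X k \<omega>)))\<^sup>2) \<partial>\<Omega>)"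
      by (rule nn_integral_mono) simp
    ultimately show ?thesis using lt by (auto simp: le_less_trans)
  qed
  have intf: "integrable \<Omega> (\<lambda>\<omega>. f (X k \<omega>))" for k
  proof (induction k)
    case 0 then show ?case by (simp add: X_def)
  next
    case (Suc k)
    have "integrable \<Omega> (\<lambda>\<omega>. f (X (Suc k) \<omega>) - finf)"
    proof (rule integrableI_bounded)
      show "(\<lambda>\<omega>. f (X (Suc k) \<omega>) - finf) \<in> borel_measurable \<Omega>" by measurable
      have "(\<integral>\<^sup>+\<omega>. ennreal (norm (f (X (Suc k) \<omega>) - finf)) \<partial>\<Omega>) = (\<integral>\<^sup>+\<omega>. ennreal (f (X (Suc k) \<omega>) - finf) \<partial>\<Omega>)"
        using finf_le by (intro nn_integral_cong) simp
      then show "(\<integral>\<^sup>+\<omega>. ennreal (norm (f (X (Suc k) \<omega>) - finf)) \<partial>\<Omega>) < \<infinity>" using fin[OF Suc.IH] by simp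
    qed
    from Bochner_Integration.integrable_add[OF this \<Omega>.integrable_const[of finf]]
    show ?case by simp
  qed
  have intg: "integrable \<Omega> (\<lambda>\<omega>. (norm (gradf (X k \<omega>)))\<^sup>2)" for k
  proof -
    have "integrable \<Omega> (\<lambda>\<omega>. \<gamma>/2 * (norm (gradf (X k \<omega>)))\<^sup>2)"
    proof (rule integrableI_bounded)
      show "(\<lambda>\<omega>. \<gamma>/2 * (norm (gradf (X k \<omega>)))\<^sup>2) \<in> borel_measurable \<Omega>" by measurable
      have "(\<integral>\<^sup>+\<omega>. ennreal (norm (\<gamma>/2 * (norm (gradf (X k \<omega>)))\<^sup>2)) \<partial>\<Omega>) = (\<integral>\<^sup>+\<omega>. ennreal (\<gamma>/2 * (norm (gradf (X k \<omega>)))\<^sup>2) \<partial>\<Omega>)"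
        using \<gamma>_pos by (intro nn_integral_cong) simp
      then show "(\<integral>\<^sup>+\<omega>. ennreal (norm (\<gamma>/2 * (norm (gradf (X k \<omega>)))\<^sup>2)) \<partial>\<Omega>) < \<infinity>" using fin[OF intf[of k]] by simp
    qed
    then show ?thesis using \<gamma>_pos integrable_mult_left_iff[of \<Omega> "\<gamma>/2" "\<lambda>\<omega>. (norm (gradf (X k \<omega>)))\<^sup>2"] by simp
  qed
  have real_ineq: "((\<integral>\<omega>. f (X (Suc k) \<omega>) \<partial>\<Omega>) - finf) + \<gamma>/2 * (\<integral>\<omega>. (norm (gradf (X k \<omega>)))\<^sup>2 \<partial>\<Omega>)
      \<le> q * ((\<integral>\<omega>. f (X k \<omega>) \<partial>\<Omega>) - finf) + (L * C / 2) * \<gamma>\<^sup>2" for k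
  proof -
    have nn: "0 \<le> f (X (Suc k) \<omega>) - finf" "0 \<le> \<gamma>/2 * (norm (gradf (X k \<omega>)))\<^sup>2" for \<omega>
      using finf_le \<gamma>_pos by auto
    have "(\<integral>\<^sup>+\<omega>. ennreal (f (X (Suc k) \<omega>) - finf) + ennreal (\<gamma>/2 * (norm (gradf (X k \<omega>)))\<^sup>2) \<partial>\<Omega>)
       = (\<integral>\<^sup>+\<omega>. ennreal (f (X (Suc k) \<omega>) - finf + \<gamma>/2 * (norm (gradf (X k \<omega>)))\<^sup>2) \<partial>\<Omega>)"
      using nn by (intro nn_integral_cong) (simp add: ennreal_plus)
    also have "\<dots> = ennreal (\<integral>\<omega>. f (X (Suc k) \<omega>) - finf + \<gamma>/2 * (norm (gradf (X k \<omega>)))\<^sup>2 \<partial>\<Omega>)"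
      by (rule nn_integral_eq_integral) (use intf intg nn in \<open>auto intro!: AE_I2 add_nonneg_nonneg\<close>)
    finally have "ennreal (\<integral>\<omega>. f (X (Suc k) \<omega>) - finf + \<gamma>/2 * (norm (gradf (X k \<omega>)))\<^sup>2 \<partial>\<Omega>)
        \<le> ennreal (\<integral>\<omega>. q * (f (X k \<omega>) - finf) + c \<partial>\<Omega>)"
      using ineq_nn[of k] unfolding rhs_eq[OF intf[of k]] by simp
    moreover have "0 \<le> (\<integral>\<omega>. q * (f (X k \<omega>) - finf) + c \<partial>\<Omega>)"
      using q1 c0 finf_le by (intro integral_nonneg_AE AE_I2 add_nonneg_nonneg mult_nonneg_nonneg) auto
    ultimately have le: "(\<integral>\<omega>. f (X (Suc k) \<omega>) - finf + \<gamma>/2 * (norm (gradf (X k \<omega>)))\<^sup>2 \<partial>\<Omega>)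
        \<le> (\<integral>\<omega>. q * (f (X k \<omega>) - finf) + c \<partial>\<Omega>)"
      using ennreal_le_iff by blast
    have e1: "(\<integral>\<omega>. f (X (Suc k) \<omega>) - finf + \<gamma>/2 * (norm (gradf (X k \<omega>)))\<^sup>2 \<partial>\<Omega>)
        = ((\<integral>\<omega>. f (X (Suc k) \<omega>) \<partial>\<Omega>) - finf) + \<gamma>/2 * (\<integral>\<omega>. (norm (gradf (X k \<omega>)))\<^sup>2 \<partial>\<Omega>)"
      using intf intg by (simp add: \<Omega>.prob_space)
    have e2: "(\<integral>\<omega>. q * (f (X k \<omega>) - finf) + c \<partial>\<Omega>) = q * ((\<integral>\<omega>. f (X k \<omega>) \<partial>\<Omega>) - finf) + (L * C / 2) * \<gamma>\<^sup>2"
      using intf by (simp add: \<Omega>.prob_space c_def)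
    show ?thesis using le unfolding e1 e2 .
  qed
  have tel: "1/2 * (\<Sum>k<K. wm1 / q^(k+1) * (\<integral>\<omega>. (norm (gradf (X k \<omega>)))\<^sup>2 \<partial>\<Omega>))
      + wm1 / q^K / \<gamma> * ((\<integral>\<omega>. f (X K \<omega>) \<partial>\<Omega>) - finf)
     \<le> wm1 / \<gamma> * ((\<integral>\<omega>. f (X 0 \<omega>) \<partial>\<Omega>) - finf) + (L * C / 2) * (\<Sum>k<K. wm1 / q^(k+1) * \<gamma>)"
    by (rule telescope[where \<delta>="\<lambda>k. (\<integral>\<omega>. f (X k \<omega>) \<partial>\<Omega>) - finf"
          and r="\<lambda>k. \<integral>\<omega>. (norm (gradf (X k \<omega>)))\<^sup>2 \<partial>\<Omega>", OF real_ineq])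
       (use q1 \<gamma>_pos wm1_pos in auto)
  have KK: "K - 1 + 1 = K" using K by simp
  show ?thesis
    using tel unfolding Let_def KK q_def[symmetric] \<Omega>_def[symmetric] X_def[symmetric] finf_def[symmetric]
    by simp
qed

end
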